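(* The size $g_{is}$ of the GCIS grammar satisfies: substitutions: $\liminf_{n\to\infty}\mathsf{MS}_{\mathrm{sub}}(g_{is},n)\ge 4$ and $\mathsf{AS}_{\mathrm{sub}}(g_{is},n)\ge 3g_{is}-13=\Omega(n)$; insertions: $\liminf_{n\to\infty}\mathsf{MS}_{\mathrm{ins}}(g_{is},n)\ge 4$ and $\mathsf{AS}_{\mathrm{ins}}(g_{is},n)\ge 3g_{is}-24=\Omega(n)$; deletions: $\liminf_{n\to\infty}\mathsf{MS}_{\mathrm{del}}(g_{is},n)\ge 4$ and $\mathsf{AS}_{\mathrm{del}}(g_{is},n)\ge 3g_{is}-29=\Omega(n)$.
   Context: Strings are over an integer (ordered) alphabet $\Sigma=\{1,\ldots,\sigma\}$ (with enough characters, e.g. $\{0,1,2,3\}$); $\mathsf{ed}$ is the edit distance. $\mathsf{MS}_{\mathrm{sub}}(C,n)=\max_{T\in\Sigma^n}\{C(T')/C(T): T'\in\Sigma^n,\ \mathsf{ed}(T,T')=1\}$, with $\mathsf{MS}_{\mathrm{ins}},\mathsf{MS}_{\mathrm{del}}$ analogous for $T'$ of length $n+1$, resp. $n-1$, and $\mathsf{AS}_\ast$ analogous with $C(T')-C(T)$. A bound "$\mathsf{AS}\ge 3g_{is}-c$" means there exist strings $T$ (with $g_{is}(T)$ arbitrarily large) and $T'$ obtained by one edit of that type with $g_{is}(T')-g_{is}(T)\ge 3g_{is}(T)-c$. GCIS: for a string $G$ (to which a unique smallest end-marker $\$$ is appended), position $i$ is of type L if the suffix $G[i..]$ is lexicographically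 larger than $G[i+1..]$, and of type S otherwise; position $i$ is an LMS position if it is of type S and $i-1$ is of type L; positions $1$ and $|G\$|$ are also treated as LMS positions. If $i_1<\cdots<i_{z+1}$ are the LMS positions, the GCIS-parsing of $G$ is $G=D_1\cdots D_z$ with $D_j=G[i_j..i_{j+1}-1]$. Each factor $D_j$ is replaced by a fresh nonterminal $R_j$, where equal factors receive equal nonterminals and nonterminals are assigned in the lexicographic order of the factors, using integers larger than all previously used symbols; $R_1\cdots R_z$ is the GCIS-string of $G$, and $\mathcal{D}(G)=\{D_1,\ldots,D_z\}$ is the set of distinct factors. Let $G_0=T$ and $G_{k+1}$ be the GCIS-string of $G_k$, with $\mathcal{D}_{k+1}=\mathcal{D}(G_k)$; the process stops at the first $k=r$ such that $G_r[2..|G_r|]$ contains no LMS position. The GCIS grammar size is $g_{is}(T)=|T|$ if $r=0$, and $g_{is}(T)=\|\mathcal{D}_1\|+\cdots+\|\mathcal{D}_r\|+|G_r|$ if $r\ge1$, where $\|\mathcal{S}\|$ is the total length of the strings in a set $\mathcal{S}$. *)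

theory Defs
  imports "HOL-Analysis.Analysis"
begin

fun ed :: "'a list \<Rightarrow> 'a list \<Rightarrow> nat" where
  "ed [] ys = length ys"
| "ed (x # xs) [] = Suc (length xs)"
| "ed (x # xs) (y # ys) =
     min (min (Suc (ed xs (y # ys))) (Suc (ed (x # xs) ys)))
         (ed xs ys + (if x = y then 0 else 1))"

definition strings :: "nat \<Rightarrow> nat \<Rightarrow> nat list set" where
  "strings \<sigma> n = {T. length T = n \<and> set T \<subseteq> {1..\<sigma>}}"

definition lex_less :: "nat list \<Rightarrow> nat list \<Rightarrow> bool" where
  "lex_less u v \<longleftrightarrow> (u, v) \<in> lexord {(a, b). a < b}"

text \<open>The string G with the unique smallest end-marker appended: every symbol of G
  is shifted by one and the end-marker is 0.\<close>
definition with_end :: "nat list \<Rightarrow> nat list" where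
  "with_end G = map Suc G @ [0]"

text \<open>Positions are 0-based here: position i (i < length G) of G is the paper's
  position i+1; position length G is the end-marker.\<close>
definition typeL :: "nat list \<Rightarrow> nat \<Rightarrow> bool" where
  "typeL G i \<longleftrightarrow> i < length G \<and>
     lex_less (drop (Suc i) (with_end G)) (drop i (with_end G))"

definition typeS :: "nat list \<Rightarrow> nat \<Rightarrow> bool" where
  "typeS G i \<longleftrightarrow> i \<le> length G \<and> \<not> typeL G i"

definition LMS :: "nat list \<Rightarrow> nat set" where
  "LMS G = {0, length G} \<union> {i. 0 < i \<and> i \<le> length G \<and> typeS G i \<and> typeL G (i - 1)}"

definition lms_list :: "nat list \<Rightarrow> nat list" where
  "lms_list G = sorted_list_of_set (LMS G)"

definition factors :: "nat list \<Rightarrow> nat list list" where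
  "factors G = (let p = lms_list G in
     map (\<lambda>j. take (p ! Suc j - p ! j) (drop (p ! j) G)) [0..<length p - 1])"

definition Dset :: "nat list \<Rightarrow> nat list set" where
  "Dset G = set (factors G)"

definition Dsize :: "nat list \<Rightarrow> nat" where
  "Dsize G = (\<Sum>D\<in>Dset G. length D)"

text \<open>Nonterminal of a factor: fresh integers larger than all previously used symbols
  (the largest previously used symbol is the maximum symbol of G), assigned in the
  lexicographic order of the distinct factors.\<close>
definition nonterm :: "nat list \<Rightarrow> nat list \<Rightarrow> nat" where
  "nonterm G D = Max (insert 0 (set G)) + 1 + card {D' \<in> Dset G. lex_less D' D}"

definition gcis_string :: "nat list \<Rightarrow> nat list" where
  "gcis_string G = map (nonterm G) (factors G)"

definition Gk :: "nat list \<Rightarrow> nat \<Rightarrow> nat list" where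
  "Gk T k = (gcis_string ^^ k) T"

text \<open>Stop when G[2..|G|] (1-based) contains no LMS position, i.e. no LMS position in
  the 0-based range 1 .. length G - 1.\<close>
definition stops :: "nat list \<Rightarrow> bool" where
  "stops G \<longleftrightarrow> (\<forall>i\<in>LMS G. i = 0 \<or> length G \<le> i)"

definition gcis_r :: "nat list \<Rightarrow> nat" where
  "gcis_r T = (LEAST k. stops (Gk T k))"

definition g_is :: "nat list \<Rightarrow> nat" where
  "g_is T = (let r = gcis_r T in
     if r = 0 then length T else (\<Sum>k<r. Dsize (Gk T k)) + length (Gk T r))"

definition MS_sub :: "nat \<Rightarrow> (nat list \<Rightarrow> nat) \<Rightarrow> nat \<Rightarrow> real" where
  "MS_sub \<sigma> C n = Max {real (C T') / real (C T) | T T'.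
      T \<in> strings \<sigma> n \<and> T' \<in> strings \<sigma> n \<and> ed T T' = 1}"

definition MS_ins :: "nat \<Rightarrow> (nat list \<Rightarrow> nat) \<Rightarrow> nat \<Rightarrow> real" where
  "MS_ins \<sigma> C n = Max {real (C T') / real (C T) | T T'.
      T \<in> strings \<sigma> n \<and> T' \<in> strings \<sigma> (n + 1) \<and> ed T T' = 1}"

definition MS_del :: "nat \<Rightarrow> (nat list \<Rightarrow> nat) \<Rightarrow> nat \<Rightarrow> real" where
  "MS_del \<sigma> C n = Max {real (C T') / real (C T) | T T'.
      T \<in> strings \<sigma> n \<and> T' \<in> strings \<sigma> (n - 1) \<and> ed T T' = 1}"

end

theory Submission
  imports Defs
begin


fun tyl :: "nat list \<Rightarrow> bool list" where
  "tyl [] = []"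
| "tyl [a] = [True]"
| "tyl (a # b # r) = (b < a \<or> (a = b \<and> hd (tyl (b # r)))) # tyl (b # r)"

lemma length_tyl[simp]: "length (tyl G) = length G"
  by (induction G rule: tyl.induct) auto

lemma lex_less_Cons: "lex_less (a # xs) (b # ys) \<longleftrightarrow> a < b \<or> (a = b \<and> lex_less xs ys)"
  unfolding lex_less_def by auto

lemma lex_less_Nil1[simp]: "lex_less [] ys \<longleftrightarrow> ys \<noteq> []"
  unfolding lex_less_def by (cases ys) auto

lemma lex_less_Nil2[simp]: "\<not> lex_less xs []"
  unfolding lex_less_def by auto

lemma typeL_Suc: "typeL (a # r) (Suc i) = typeL r i"
  unfolding typeL_def with_end_def by simp

lemma typeL_0: "typeL (a # r) 0 = hd (tyl (a # r))"
proof (induction r arbitrary: a)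
  case Nil
  then show ?case unfolding typeL_def with_end_def by (simp add: lex_less_Cons)
next
  case (Cons b r)
  have "typeL (a # b # r) 0 \<longleftrightarrow> lex_less (Suc b # with_end r) (Suc a # Suc b # with_end r)"
    unfolding typeL_def with_end_def by simp
  also have "\<dots> \<longleftrightarrow> b < a \<or> (a = b \<and> lex_less (with_end r) (Suc b # with_end r))"
    by (auto simp add: lex_less_Cons)
  also have "lex_less (with_end r) (Suc b # with_end r) = typeL (b # r) 0"
    unfolding typeL_def with_end_def by simp
  finally show ?case using Cons by simp
qed

lemma typeL_tyl: "i < length G \<Longrightarrow> typeL G i = tyl G ! i"
proof (induction G arbitrary: i)
  case Nil then show ?case by simp
next
  case (Cons a r)
  show ?case
  proof (cases i)
    case 0 then show ?thesis by (cases r) (simp_all add: typeL_0)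
  next
    case (Suc j)
    then have "j < length r" using Cons by simp
    then have "r \<noteq> []" by auto
    then obtain b r' where r: "r = b # r'" by (cases r) auto
    show ?thesis using Cons Suc \<open>j < length r\<close> by (simp add: typeL_Suc r)
  qed
qed

lemma typeL_ge: "length G \<le> i \<Longrightarrow> \<not> typeL G i"
  unfolding typeL_def by simp

definition cutset :: "nat list \<Rightarrow> nat set" where
  "cutset G = {i. 0 < i \<and> i < length G \<and> tyl G ! (i - 1) \<and> \<not> tyl G ! i}"

lemma tyl_last: "G \<noteq> [] \<Longrightarrow> tyl G ! (length G - 1)"
  by (induction G rule: tyl.induct) (auto simp: nth_Cons')

lemma LMS_cutset: "LMS G = {0, length G} \<union> cutset G"
proof -
  have "i \<in> LMS G \<longleftrightarrow> i \<in> {0, length G} \<union> cutset G" for i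
  proof (cases "i = 0 \<or> i = length G")
    case True then show ?thesis unfolding LMS_def by auto
  next
    case False
    then have i0: "0 < i" by auto
    show ?thesis
    proof (cases "i < length G")
      case True
      then show ?thesis using False i0 unfolding LMS_def cutset_def typeS_def
        by (auto simp: typeL_tyl)
    next
      case F2: False
      then show ?thesis using False unfolding LMS_def cutset_def typeS_def by auto
    qed
  qed
  then show ?thesis by blast
qed

fun grp :: "bool \<Rightarrow> nat list \<Rightarrow> (nat \<times> bool) list \<Rightarrow> nat list list" where
  "grp p cur [] = (if cur = [] then [] else [cur])"
| "grp p cur ((a,t) # r) = (if p \<and> \<not> t then cur # grp t [a] r else grp t (cur @ [a]) r)"

fun psl :: "nat list list \<Rightarrow> nat list" where
  "psl [] = [0]"
| "psl (F # Fs) = 0 # map ((+) (length F)) (psl Fs)"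

definition Cset :: "bool \<Rightarrow> (nat \<times> bool) list \<Rightarrow> nat set" where
  "Cset p xs = {i. i < length xs \<and> (if i = 0 then p else snd (xs ! (i - 1))) \<and> \<not> snd (xs ! i)}"

lemma Cset_Nil: "Cset p [] = {}"
  unfolding Cset_def by auto

lemma Cset_Cons: "Cset p ((a,t) # r) = (if p \<and> \<not> t then {0} else {}) \<union> Suc ` Cset t r"
proof -
  have "i \<in> Cset p ((a,t) # r) \<longleftrightarrow> i \<in> (if p \<and> \<not> t then {0} else {}) \<union> Suc ` Cset t r" for i
  proof (cases i)
    case 0 then show ?thesis unfolding Cset_def by auto
  next
    case (Suc j)
    then show ?thesis unfolding Cset_def
      by (cases j) (auto simp: nth_Cons')
  qed
  then show ?thesis by blast
qed

lemma grp_props: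
  "(cur = [] \<longrightarrow> \<not> p) \<Longrightarrow> (\<forall>F\<in>set (grp p cur xs). F \<noteq> []) \<and> concat (grp p cur xs) = cur @ map fst xs \<and>
    set (psl (grp p cur xs)) = {0, length cur + length xs} \<union> (\<lambda>i. length cur + i) ` Cset p xs"
proof (induction xs arbitrary: p cur)
  case Nil
  then show ?case by (auto simp: Cset_Nil)
next
  case (Cons x r)
  obtain a t where x: "x = (a,t)" by (cases x)
  show ?case
  proof (cases "p \<and> \<not> t")
    case True
    then have cur: "cur \<noteq> []" using Cons.prems by auto
    have IH: "(\<forall>F\<in>set (grp t [a] r). F \<noteq> []) \<and> concat (grp t [a] r) = [a] @ map fst r \<and>
      set (psl (grp t [a] r)) = {0, 1 + length r} \<union> (\<lambda>i. 1 + i) ` Cset t r"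
      using Cons.IH[of "[a]" t] by simp
    show ?thesis using True cur IH unfolding x
      by (auto simp: Cset_Cons image_image)
  next
    case False
    have IH: "(\<forall>F\<in>set (grp t (cur @ [a]) r). F \<noteq> []) \<and> concat (grp t (cur @ [a]) r) = (cur @ [a]) @ map fst r \<and>
      set (psl (grp t (cur @ [a]) r)) = {0, length cur + 1 + length r} \<union> (\<lambda>i. length cur + 1 + i) ` Cset t r"
      using Cons.IH[of "cur @ [a]" t] by simp
    show ?thesis using False IH unfolding x
      by (auto simp: Cset_Cons image_image)
  qed
qed

lemma length_psl[simp]: "length (psl Fs) = Suc (length Fs)"
  by (induction Fs) auto

lemma psl_nth: "j \<le> length Fs \<Longrightarrow> psl Fs ! j = length (concat (take j Fs))"
proof (induction Fs arbitrary: j)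
  case Nil then show ?case by simp
next
  case (Cons F Fs)
  then show ?case by (cases j) auto
qed


lemma psl_sorted: "\<forall>F\<in>set Fs. F \<noteq> [] \<Longrightarrow> sorted_wrt (<) (psl Fs)"
proof (induction Fs)
  case Nil then show ?case by simp
next
  case (Cons F Fs)
  have "\<forall>x\<in>set (psl Fs). 0 < length F + x" using Cons.prems by auto
  then show ?case using Cons by (auto simp: sorted_wrt_map)
qed

lemma factors_psl:
  assumes ne: "\<forall>F\<in>set Fs. F \<noteq> []" and cc: "concat Fs = G" and L: "LMS G = set (psl Fs)"
  shows "factors G = Fs"
proof -
  have sl: "lms_list G = psl Fs"
    unfolding lms_list_def L using psl_sorted[OF ne]
    by (simp add: sorted_list_of_set.idem_if_sorted_distinct strict_sorted_iff)
  show ?thesis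
  proof (rule nth_equalityI)
    show "length (factors G) = length Fs" unfolding factors_def sl Let_def by simp
    fix j assume "j < length (factors G)"
    then have j: "j < length Fs" unfolding factors_def sl Let_def by simp
    have d: "drop (length (concat (take j Fs))) G = Fs ! j @ concat (drop (Suc j) Fs)"
    proof -
      have "G = concat (take j Fs) @ concat (drop j Fs)"
        using cc by (metis append_take_drop_id concat_append)
      then have "drop (length (concat (take j Fs))) G = concat (drop j Fs)" by (metis append_eq_conv_conj)
      also have "\<dots> = Fs ! j @ concat (drop (Suc j) Fs)" using j by (simp add: Cons_nth_drop_Suc[symmetric])
      finally show ?thesis .
    qed
    have e: "length (concat (take (Suc j) Fs)) - length (concat (take j Fs)) = length (Fs ! j)"
      using j by (simp add: take_Suc_conv_app_nth)
    show "factors G ! j = Fs ! j"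
      unfolding factors_def sl Let_def using j
      by (simp add: psl_nth e d del: take_Suc)
  qed
qed

lemma Cset_zip: "Cset False (zip G (tyl G)) = cutset G"
  unfolding Cset_def cutset_def by auto

lemma factors_grp: "factors G = grp False [] (zip G (tyl G))"
proof -
  have P: "(\<forall>F\<in>set (grp False [] (zip G (tyl G))). F \<noteq> []) \<and> concat (grp False [] (zip G (tyl G))) = map fst (zip G (tyl G)) \<and>
    set (psl (grp False [] (zip G (tyl G)))) = {0, length G} \<union> (\<lambda>i. i) ` cutset G"
    using grp_props[of "[]" False "zip G (tyl G)"] by (simp add: Cset_zip)
  show ?thesis
    by (rule factors_psl) (use P in \<open>auto simp: LMS_cutset\<close>)
qed

lemma stops_cutset: "stops G \<longleftrightarrow> cutset G = {}"
  unfolding stops_def LMS_cutset cutset_def by auto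

lemma length_factors: "G \<noteq> [] \<Longrightarrow> length (factors G) = Suc (card (cutset G))"
proof -
  assume G: "G \<noteq> []"
  have fin: "finite (cutset G)" unfolding cutset_def by auto
  have "card (LMS G) = card ({0, length G} \<union> cutset G)" by (simp add: LMS_cutset)
  also have "\<dots> = card {0, length G} + card (cutset G)"
    by (rule card_Un_disjoint) (use fin in \<open>auto simp: cutset_def\<close>)
  also have "card {0, length G} = 2" using G by simp
  finally have c: "card (LMS G) = 2 + card (cutset G)" .
  have "finite (LMS G)" using fin by (simp add: LMS_cutset)
  then have "length (lms_list G) = card (LMS G)" unfolding lms_list_def by simp
  then show ?thesis unfolding factors_def Let_def using c by simp
qed

lemma stops_factors: "G \<noteq> [] \<Longrightarrow> stops G \<longleftrightarrow> length (factors G) \<le> 1"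
proof -
  assume G: "G \<noteq> []"
  have fin: "finite (cutset G)" unfolding cutset_def by auto
  show ?thesis using length_factors[OF G] fin by (simp add: stops_cutset)
qed

lemma Gk_0[simp]: "Gk T 0 = T" unfolding Gk_def by simp
lemma Gk_Suc[simp]: "Gk T (Suc k) = gcis_string (Gk T k)" unfolding Gk_def by simp

lemma g_is_eq:
  assumes "\<forall>k<r. \<not> stops (Gk T k)" "stops (Gk T r)" "0 < r"
  shows "g_is T = (\<Sum>k<r. Dsize (Gk T k)) + length (Gk T r)"
proof -
  have "gcis_r T = r" unfolding gcis_r_def
  proof (rule Least_equality)
    show "stops (Gk T r)" by fact
    fix y assume "stops (Gk T y)" then show "r \<le> y" using assms(1) by (meson not_le)
  qed
  then show ?thesis unfolding g_is_def using assms(3) by simp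
qed

lemma Collect_insert_filter: "{x \<in> insert a A. P x} = (if P a then insert a {x \<in> A. P x} else {x \<in> A. P x})"
  by auto

lemma Collect_empty_filter: "{x \<in> {}. P x} = {}"
  by auto

lemma lex_less_irrefl[simp]: "\<not> lex_less xs xs"
  by (induction xs) (auto simp: lex_less_Cons)

lemma lex_less_same_prefix[simp]: "lex_less (xs @ ys) (xs @ zs) \<longleftrightarrow> lex_less ys zs"
  by (induction xs) (auto simp: lex_less_Cons)

lemma lex_less_same_prefix2[simp]: "lex_less xs (xs @ zs) \<longleftrightarrow> zs \<noteq> []"
  using lex_less_same_prefix[of xs "[]" zs] by simp

lemma lex_less_same_prefix3[simp]: "\<not> lex_less (xs @ zs) xs"
  using lex_less_same_prefix[of xs zs "[]"] by simp

lemma tyl_Cons2: "tyl (a # b # r) = (b < a \<or> (a = b \<and> hd (tyl (b # r)))) # tyl (b # r)"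
  by simp

lemma tyl_rep: "a \<noteq> b \<Longrightarrow> tyl (replicate k a @ b # r) = replicate k (b < a) @ tyl (b # r)"
proof (induction k)
  case 0 then show ?case by simp
next
  case (Suc k)
  then show ?case by (cases k) auto
qed

lemma tyl_rep_Cons: "a \<noteq> b \<Longrightarrow> tyl (a # replicate k a @ b # r) = (b < a) # replicate k (b < a) @ tyl (b # r)"
  using tyl_rep[of a b "Suc k" r] by simp

lemma tyl_rep_end: "tyl (replicate k a) = replicate k True"
proof (induction k)
  case 0 then show ?case by simp
next
  case (Suc k)
  then show ?case by (cases k) auto
qed

lemma tyl_rep_end_Cons: "tyl (a # replicate k a) = True # replicate k True"
  using tyl_rep_end[of "Suc k" a] by simp

lemma tyl_Cons_rep_lt: "c < a \<Longrightarrow> c < b \<Longrightarrow> a \<noteq> b \<Longrightarrow> tyl (c # replicate k a @ b # r) = False # tyl (replicate k a @ b # r)"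
  by (cases k) auto

lemma tyl_Cons_rep_gt: "a < c \<Longrightarrow> b < c \<Longrightarrow> a \<noteq> b \<Longrightarrow> tyl (c # replicate k a @ b # r) = True # tyl (replicate k a @ b # r)"
  by (cases k) auto

lemma tyl_pairs: "a < b \<Longrightarrow> tyl (concat (replicate k [a,b]) @ a # r) = concat (replicate k [False,True]) @ tyl (a # r)"
proof (induction k)
  case 0 then show ?case by simp
next
  case (Suc k)
  then show ?case by (cases k) auto
qed

lemma tyl_Cons_pairs: "a < c \<Longrightarrow> tyl (c # concat (replicate k [a,b]) @ a # r) = True # tyl (concat (replicate k [a,b]) @ a # r)"
  by (cases k) auto

lemma zip_pairs: "zip (concat (replicate k [a,b])) (concat (replicate k [s,t])) = concat (replicate k [(a,s),(b,t)])"
  by (induction k) auto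

lemma length_concat_rep2[simp]: "length (concat (replicate k [a,b])) = 2 * k"
  by (induction k) auto

lemma grp_rep: "grp t cur (replicate k (a,t) @ r) = grp t (cur @ replicate k a) r"
  by (induction k arbitrary: cur) (auto simp: replicate_app_Cons_same)

lemma grp_rep_end: "grp t cur (replicate k (a,t)) = grp t (cur @ replicate k a) []"
  using grp_rep[of t cur k a "[]"] by simp

lemma grp_pairs: "grp True [a,b] (concat (replicate k [(a,False),(b,True)]) @ r) = replicate k [a,b] @ grp True [a,b] r"
  by (induction k) auto

lemma grp_pairs2: "cur \<noteq> [] \<Longrightarrow> grp True cur (concat (replicate k [(a,False),(b,True)]) @ (a,False) # r) = cur # replicate k [a,b] @ grp False [a] r"
  by (induction k arbitrary: cur) auto

lemma Max_set_eq: "(\<forall>x\<in>set G. x \<le> (M::nat)) \<Longrightarrow> M \<in> set G \<Longrightarrow> Max (insert 0 (set G)) = M"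
  by (intro Max_eqI) auto




lemmas tyl_simps = tyl_rep tyl_rep_Cons tyl_rep_end tyl_rep_end_Cons tyl_Cons_rep_lt tyl_Cons_rep_gt
  tyl_pairs tyl_Cons_pairs
lemmas grp_simps = grp_rep grp_rep_end grp_pairs grp_pairs2 zip_pairs replicate_app_Cons_same

lemma remdups_rep_app[simp]: "x \<in> set ys \<Longrightarrow> remdups (replicate k x @ ys) = remdups ys"
  by (induction k) auto

lemma remdups_rep[simp]: "remdups (replicate k x) = (if k = 0 then [] else [x])"
  by (induction k) auto

lemma remdups_Cons_rep[simp]: "remdups (x # replicate k x @ ys) = remdups (x # ys)"
  by (induction k) auto

lemma Dset_f: "factors G = Fs \<Longrightarrow> Dset G = set Fs" unfolding Dset_def by simp
lemma Dsize_f: "factors G = Fs \<Longrightarrow> Dsize G = sum_list (map length (remdups (rev Fs)))"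
  unfolding Dsize_def Dset_def by (metis set_rev sum.set_conv_list)

lemma gcis_string_f:
  assumes "factors G = Fs" "Max (insert 0 (set G)) = M"
  shows "gcis_string G = map (\<lambda>D. M + 1 + length (remdups (rev (filter (\<lambda>D'. lex_less D' D) Fs)))) Fs"
proof -
  have "card {D' \<in> set Fs. lex_less D' D} = length (remdups (rev (filter (\<lambda>D'. lex_less D' D) Fs)))" for D
    by (metis length_remdups_card_conv set_filter set_rev)
  then show ?thesis unfolding gcis_string_def nonterm_def Dset_def assms by simp
qed

definition "blkA k = 2 # replicate k 2 @ [3::nat]"
definition "TA k = blkA k @ blkA k @ blkA k @ blkA k"

lemma g_TA: "g_is (TA k) = k + 6"
proof -
  have f0: "factors (TA k) = [blkA k, blkA k, blkA k, blkA k]"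
    unfolding factors_grp TA_def blkA_def by (simp add: tyl_simps grp_simps)
  have mx: "Max (insert 0 (set (TA k))) = 3"
    by (rule Max_set_eq) (auto simp: TA_def blkA_def)
  have g1: "gcis_string (TA k) = [4,4,4,4]"
    unfolding gcis_string_f[OF f0 mx] by (simp add:  lex_less_Cons)
  have f1: "factors [4,4,4,4::nat] = [[4,4,4,4]]" by (simp add: factors_grp)
  have "g_is (TA k) = (\<Sum>j<1. Dsize (Gk (TA k) j)) + length (Gk (TA k) 1)"
  proof (rule g_is_eq)
    show "\<forall>j<1. \<not> stops (Gk (TA k) j)" using f0 by (simp add: stops_factors TA_def blkA_def)
    show "stops (Gk (TA k) 1)" using g1 f1 by (simp add: stops_factors)
  qed simp
  also have "\<dots> = k + 6" using g1 by (simp add: Dsize_f[OF f0] blkA_def)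
  finally show ?thesis .
qed

definition "TA' k = blkA k @ (2 # replicate k 2 @ [1::nat]) @ blkA k @ blkA k"

lemma g_TA': "g_is (TA' k) = 4 * k + 13"
proof -
  let ?A = "2 # replicate k 2 @ 3 # 2 # replicate k (2::nat)"
  let ?B = "1 # 2 # replicate k 2 @ [3::nat]"
  have f0: "factors (TA' k) = [?A, ?B, blkA k]"
    unfolding factors_grp TA'_def blkA_def by (simp add: tyl_simps grp_simps)
  have mx: "Max (insert 0 (set (TA' k))) = 3"
    by (rule Max_set_eq) (auto simp: TA'_def blkA_def)
  have g1: "gcis_string (TA' k) = [6,4,5]"
    unfolding gcis_string_f[OF f0 mx] by (simp add:  lex_less_Cons blkA_def)
  have f1: "factors [6,4,5::nat] = [[6],[4,5]]" by (simp add: factors_grp)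
  have g2: "gcis_string [6,4,5::nat] = [8,7]"
    by (simp add: gcis_string_f[OF f1] lex_less_Cons Max_set_eq)
  have f2: "factors [8,7::nat] = [[8,7]]" by (simp add: factors_grp)
  have "g_is (TA' k) = (\<Sum>j<2. Dsize (Gk (TA' k) j)) + length (Gk (TA' k) 2)"
  proof (rule g_is_eq)
    show "\<forall>j<2. \<not> stops (Gk (TA' k) j)" using f0 g1 f1 by (auto simp: stops_factors TA'_def blkA_def less_2_cases_iff)
    show "stops (Gk (TA' k) 2)" using g1 g2 f2 by (simp add: stops_factors numeral_2_eq_2)
  qed simp
  also have "\<dots> = 4 * k + 13" using g1 g2 by (simp add: Dsize_f[OF f0] Dsize_f[OF f1] blkA_def numeral_2_eq_2)
  finally show ?thesis .
qed

definition "blkF k = 1 # 2 # concat (replicate k [1,2]) @ [1,3::nat]"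
definition "TF k = blkF k @ blkF k @ blkF k @ blkF k"

lemma g_TF: "g_is (TF k) = k + 10"
proof -
  let ?b = "[1,2] # replicate k [1,2] @ [[1,3::nat]]"
  let ?X = "4 # replicate k 4 @ [5::nat]"
  have f0: "factors (TF k) = ?b @ ?b @ ?b @ ?b"
    unfolding factors_grp TF_def blkF_def by (simp add: tyl_simps grp_simps)
  have mx: "Max (insert 0 (set (TF k))) = 3"
    by (rule Max_set_eq) (auto simp: TF_def blkF_def)
  have g1: "gcis_string (TF k) = ?X @ ?X @ ?X @ ?X"
    unfolding gcis_string_f[OF f0 mx] by (simp add:  lex_less_Cons)
  have f1: "factors (?X @ ?X @ ?X @ ?X) = [?X, ?X, ?X, ?X]"
    unfolding factors_grp by (simp add: tyl_simps grp_simps)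
  have mx1: "Max (insert 0 (set (?X @ ?X @ ?X @ ?X))) = 5"
    by (rule Max_set_eq) auto
  have g2: "gcis_string (?X @ ?X @ ?X @ ?X) = [6,6,6,6]"
    unfolding gcis_string_f[OF f1 mx1] by (simp add: )
  have f2: "factors [6,6,6,6::nat] = [[6,6,6,6]]" by (simp add: factors_grp)
  have "g_is (TF k) = (\<Sum>j<2. Dsize (Gk (TF k) j)) + length (Gk (TF k) 2)"
  proof (rule g_is_eq)
    show "\<forall>j<2. \<not> stops (Gk (TF k) j)" using f0 g1 f1 by (auto simp: stops_factors TF_def blkF_def less_2_cases_iff)
    show "stops (Gk (TF k) 2)" using g1 g2 f2 by (simp add: stops_factors numeral_2_eq_2)
  qed simp
  also have "\<dots> = Dsize (TF k) + Dsize (?X @ ?X @ ?X @ ?X) + 4" using g1 g2 by (simp add: numeral_2_eq_2)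
  also have "Dsize (TF k) = 4" unfolding Dsize_f[OF f0] by simp
  also have "Dsize (?X @ ?X @ ?X @ ?X) = k + 2" unfolding Dsize_f[OF f1] by simp
  finally show ?thesis by simp
qed

lemma g_is3:
  assumes "\<not> stops T" "gcis_string T = G1" "\<not> stops G1" "gcis_string G1 = G2" "\<not> stops G2"
    "gcis_string G2 = G3" "stops G3"
  shows "g_is T = Dsize T + Dsize G1 + Dsize G2 + length G3"
proof -
  have "g_is T = (\<Sum>j<3. Dsize (Gk T j)) + length (Gk T 3)"
  proof (rule g_is_eq)
    show "\<forall>j<3. \<not> stops (Gk T j)" using assms by (auto simp: numeral_3_eq_3 less_Suc_eq)
    show "stops (Gk T 3)" using assms by (simp add: numeral_3_eq_3)
  qed simp
  then show ?thesis using assms by (simp add: numeral_3_eq_3)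
qed

lemma g_is2:
  assumes "\<not> stops T" "gcis_string T = G1" "\<not> stops G1" "gcis_string G1 = G2" "stops G2"
  shows "g_is T = Dsize T + Dsize G1 + length G2"
proof -
  have "g_is T = (\<Sum>j<2. Dsize (Gk T j)) + length (Gk T 2)"
  proof (rule g_is_eq)
    show "\<forall>j<2. \<not> stops (Gk T j)" using assms by (auto simp: numeral_2_eq_2 less_Suc_eq)
    show "stops (Gk T 2)" using assms by (simp add: numeral_2_eq_2)
  qed simp
  then show ?thesis using assms by (simp add: numeral_2_eq_2)
qed

definition "TFi k = blkF k @ (1 # 2 # concat (replicate k [1,2]) @ [1,1,3]) @ blkF k @ blkF k"

lemma g_TFi: "g_is (TFi k) = 4 * k + 20"
proof -
  let ?b = "[1,2] # replicate k [1,2] @ [[1,3::nat]]"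
  let ?X = "5 # replicate k 5 @ [6::nat]"
  let ?G1 = "?X @ (5 # replicate k 5 @ [4]) @ ?X @ ?X"
  let ?A = "5 # replicate k 5 @ 6 # 5 # replicate k (5::nat)"
  let ?B = "4 # 5 # replicate k 5 @ [6::nat]"
  have f0: "factors (TFi k) = ?b @ ([1,2] # replicate k [1,2] @ [[1,1,3]]) @ ?b @ ?b"
    unfolding factors_grp TFi_def blkF_def by (simp add: tyl_simps grp_simps)
  have mx: "Max (insert 0 (set (TFi k))) = 3"
    by (rule Max_set_eq) (auto simp: TFi_def blkF_def)
  have g1: "gcis_string (TFi k) = ?G1"
    unfolding gcis_string_f[OF f0 mx] by (simp add: lex_less_Cons)
  have f1: "factors ?G1 = [?A, ?B, ?X]"
    unfolding factors_grp by (simp add: tyl_simps grp_simps)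
  have mx1: "Max (insert 0 (set ?G1)) = 6"
    by (rule Max_set_eq) auto
  have g2: "gcis_string ?G1 = [9,7,8]"
    unfolding gcis_string_f[OF f1 mx1] by (simp add: lex_less_Cons)
  have f2: "factors [9,7,8::nat] = [[9],[7,8]]" by (simp add: factors_grp)
  have g3: "gcis_string [9,7,8::nat] = [11,10]"
    using gcis_string_f[OF f2, of 9] by (simp add: lex_less_Cons Max_set_eq)
  have f3: "factors [11,10::nat] = [[11,10]]" by (simp add: factors_grp)
  have "g_is (TFi k) = Dsize (TFi k) + Dsize ?G1 + Dsize [9,7,8] + length [11,10::nat]"
    by (rule g_is3[OF _ g1 _ g2 _ g3]) (use f0 f1 f2 f3 in \<open>simp_all add: stops_factors TFi_def blkF_def\<close>)
  also have "Dsize (TFi k) = 7" unfolding Dsize_f[OF f0] by simp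
  also have "Dsize ?G1 = 4 * k + 8" unfolding Dsize_f[OF f1] by simp
  also have "Dsize [9,7,8::nat] = 3" unfolding Dsize_f[OF f2] by simp
  finally show ?thesis by simp
qed

definition "TFd k = blkF k @ (1 # 2 # concat (replicate k [1,2]) @ [1]) @ blkF k @ blkF k"

lemma g_TFd: "g_is (TFd k) = 4 * k + 19"
proof -
  let ?b = "[1,2] # replicate k [1,2] @ [[1,3::nat]]"
  let ?X = "5 # replicate k 5 @ [6::nat]"
  let ?G1 = "?X @ (5 # replicate k 5 @ [4]) @ (replicate k 5 @ [6]) @ ?X"
  let ?A = "5 # replicate k 5 @ 6 # 5 # replicate k (5::nat)"
  let ?B = "4 # replicate k 5 @ [6::nat]"
  have f0: "factors (TFd k) = ?b @ ([1,2] # replicate k [1,2] @ [[1,1,2]]) @ (replicate k [1,2] @ [[1,3]]) @ ?b"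
    unfolding factors_grp TFd_def blkF_def by (simp add: tyl_simps grp_simps)
  have mx: "Max (insert 0 (set (TFd k))) = 3"
    by (rule Max_set_eq) (auto simp: TFd_def blkF_def)
  have g1: "gcis_string (TFd k) = ?G1"
    unfolding gcis_string_f[OF f0 mx] by (simp add: lex_less_Cons)
  have f1: "factors ?G1 = [?A, ?B, ?X]"
    unfolding factors_grp by (simp add: tyl_simps grp_simps)
  have mx1: "Max (insert 0 (set ?G1)) = 6"
    by (rule Max_set_eq) auto
  have g2: "gcis_string ?G1 = [9,7,8]"
    unfolding gcis_string_f[OF f1 mx1] by (simp add: lex_less_Cons)
  have f2: "factors [9,7,8::nat] = [[9],[7,8]]" by (simp add: factors_grp)
  have g3: "gcis_string [9,7,8::nat] = [11,10]"
    using gcis_string_f[OF f2, of 9] by (simp add: lex_less_Cons Max_set_eq)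
  have f3: "factors [11,10::nat] = [[11,10]]" by (simp add: factors_grp)
  have "g_is (TFd k) = Dsize (TFd k) + Dsize ?G1 + Dsize [9,7,8] + length [11,10::nat]"
    by (rule g_is3[OF _ g1 _ g2 _ g3]) (use f0 f1 f2 f3 in \<open>simp_all add: stops_factors TFd_def blkF_def\<close>)
  also have "Dsize (TFd k) = 7" unfolding Dsize_f[OF f0] by simp
  also have "Dsize ?G1 = 4 * k + 7" unfolding Dsize_f[OF f1] by simp
  also have "Dsize [9,7,8::nat] = 3" unfolding Dsize_f[OF f2] by simp
  finally show ?thesis by simp
qed

definition "pre t = 3 # replicate t (3::nat)"

definition "TFt t k = pre t @ TF k"

lemma g_TFt: "g_is (TFt t k) = k + t + 13"
proof -
  let ?b = "[1,2] # replicate k [1,2] @ [[1,3::nat]]"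
  let ?X = "4 # replicate k 4 @ [5::nat]"
  let ?G1 = "6 # ?X @ ?X @ ?X @ ?X"
  have f0: "factors (TFt t k) = pre t # ?b @ ?b @ ?b @ ?b"
    unfolding factors_grp TFt_def TF_def blkF_def pre_def by (simp add: tyl_simps grp_simps)
  have mx: "Max (insert 0 (set (TFt t k))) = 3"
    by (rule Max_set_eq) (auto simp: TFt_def TF_def blkF_def pre_def)
  have g1: "gcis_string (TFt t k) = ?G1"
    unfolding gcis_string_f[OF f0 mx] by (simp add: lex_less_Cons pre_def)
  have f1: "factors ?G1 = [[6], ?X, ?X, ?X, ?X]"
    unfolding factors_grp by (simp add: tyl_simps grp_simps)
  have mx1: "Max (insert 0 (set ?G1)) = 6"
    by (rule Max_set_eq) auto
  have g2: "gcis_string ?G1 = [8,7,7,7,7]"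
    unfolding gcis_string_f[OF f1 mx1] by (simp add: lex_less_Cons)
  have f2: "factors [8,7,7,7,7::nat] = [[8,7,7,7,7]]" by (simp add: factors_grp)
  have "g_is (TFt t k) = Dsize (TFt t k) + Dsize ?G1 + length [8,7,7,7,7::nat]"
    by (rule g_is2[OF _ g1 _ g2]) (use f0 f1 f2 in \<open>simp_all add: stops_factors TFt_def TF_def blkF_def pre_def\<close>)
  also have "Dsize (TFt t k) = t + 5" unfolding Dsize_f[OF f0] by (simp add: pre_def)
  also have "Dsize ?G1 = k + 3" unfolding Dsize_f[OF f1] by simp
  finally show ?thesis by simp
qed

definition "TFts t k = pre t @ blkF k @ (1 # 2 # concat (replicate k [1,2]) @ [1,1]) @ blkF k @ blkF k"

lemma g_TFts: "g_is (TFts t k) = 4 * k + t + 23"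
proof -
  let ?b = "[1,2] # replicate k [1,2] @ [[1,3::nat]]"
  let ?X = "5 # replicate k 5 @ [6::nat]"
  let ?G1 = "7 # ?X @ (5 # replicate k 5 @ [4]) @ (replicate k 5 @ [6]) @ ?X"
  let ?A = "5 # replicate k 5 @ 6 # 5 # replicate k (5::nat)"
  let ?B = "4 # replicate k 5 @ [6::nat]"
  have f0: "factors (TFts t k) = pre t # ?b @ ([1,2] # replicate k [1,2] @ [[1,1,1,2]]) @ (replicate k [1,2] @ [[1,3]]) @ ?b"
    unfolding factors_grp TFts_def blkF_def pre_def by (simp add: tyl_simps grp_simps)
  have mx: "Max (insert 0 (set (TFts t k))) = 3"
    by (rule Max_set_eq) (auto simp: TFts_def blkF_def pre_def)
  have g1: "gcis_string (TFts t k) = ?G1"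
    unfolding gcis_string_f[OF f0 mx] by (simp add: lex_less_Cons pre_def)
  have f1: "factors ?G1 = [[7], ?A, ?B, ?X]"
    unfolding factors_grp by (simp add: tyl_simps grp_simps)
  have mx1: "Max (insert 0 (set ?G1)) = 7"
    by (rule Max_set_eq) auto
  have g2: "gcis_string ?G1 = [11,10,8,9]"
    unfolding gcis_string_f[OF f1 mx1] by (simp add: lex_less_Cons)
  have f2: "factors [11,10,8,9::nat] = [[11,10],[8,9]]" by (simp add: factors_grp)
  have g3: "gcis_string [11,10,8,9::nat] = [13,12]"
    using gcis_string_f[OF f2, of 11] by (simp add: lex_less_Cons Max_set_eq)
  have f3: "factors [13,12::nat] = [[13,12]]" by (simp add: factors_grp)
  have "g_is (TFts t k) = Dsize (TFts t k) + Dsize ?G1 + Dsize [11,10,8,9] + length [13,12::nat]"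
    by (rule g_is3[OF _ g1 _ g2 _ g3]) (use f0 f1 f2 f3 in \<open>simp_all add: stops_factors TFts_def blkF_def pre_def\<close>)
  also have "Dsize (TFts t k) = t + 9" unfolding Dsize_f[OF f0] by (simp add: pre_def)
  also have "Dsize ?G1 = 4 * k + 8" unfolding Dsize_f[OF f1] by simp
  also have "Dsize [11,10,8,9::nat] = 4" unfolding Dsize_f[OF f2] by simp
  finally show ?thesis by simp
qed

definition "TFti t k = pre t @ TFi k"

lemma g_TFti: "g_is (TFti t k) = 4 * k + t + 23"
proof -
  let ?b = "[1,2] # replicate k [1,2] @ [[1,3::nat]]"
  let ?X = "5 # replicate k 5 @ [6::nat]"
  let ?G1 = "7 # ?X @ (5 # replicate k 5 @ [4]) @ ?X @ ?X"
  let ?A = "5 # replicate k 5 @ 6 # 5 # replicate k (5::nat)"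
  let ?B = "4 # 5 # replicate k 5 @ [6::nat]"
  have f0: "factors (TFti t k) = pre t # ?b @ ([1,2] # replicate k [1,2] @ [[1,1,3]]) @ ?b @ ?b"
    unfolding factors_grp TFti_def TFi_def blkF_def pre_def by (simp add: tyl_simps grp_simps)
  have mx: "Max (insert 0 (set (TFti t k))) = 3"
    by (rule Max_set_eq) (auto simp: TFti_def TFi_def blkF_def pre_def)
  have g1: "gcis_string (TFti t k) = ?G1"
    unfolding gcis_string_f[OF f0 mx] by (simp add: lex_less_Cons pre_def)
  have f1: "factors ?G1 = [[7], ?A, ?B, ?X]"
    unfolding factors_grp by (simp add: tyl_simps grp_simps)
  have mx1: "Max (insert 0 (set ?G1)) = 7"
    by (rule Max_set_eq) auto
  have g2: "gcis_string ?G1 = [11,10,8,9]"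
    unfolding gcis_string_f[OF f1 mx1] by (simp add: lex_less_Cons)
  have f2: "factors [11,10,8,9::nat] = [[11,10],[8,9]]" by (simp add: factors_grp)
  have g3: "gcis_string [11,10,8,9::nat] = [13,12]"
    using gcis_string_f[OF f2, of 11] by (simp add: lex_less_Cons Max_set_eq)
  have f3: "factors [13,12::nat] = [[13,12]]" by (simp add: factors_grp)
  have "g_is (TFti t k) = Dsize (TFti t k) + Dsize ?G1 + Dsize [11,10,8,9] + length [13,12::nat]"
    by (rule g_is3[OF _ g1 _ g2 _ g3]) (use f0 f1 f2 f3 in \<open>simp_all add: stops_factors TFti_def TFi_def blkF_def pre_def\<close>)
  also have "Dsize (TFti t k) = t + 8" unfolding Dsize_f[OF f0] by (simp add: pre_def)
  also have "Dsize ?G1 = 4 * k + 9" unfolding Dsize_f[OF f1] by simp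
  also have "Dsize [11,10,8,9::nat] = 4" unfolding Dsize_f[OF f2] by simp
  finally show ?thesis by simp
qed

definition "TFtd t k = pre t @ TFd k"

lemma g_TFtd: "g_is (TFtd t k) = 4 * k + t + 22"
proof -
  let ?b = "[1,2] # replicate k [1,2] @ [[1,3::nat]]"
  let ?X = "5 # replicate k 5 @ [6::nat]"
  let ?G1 = "7 # ?X @ (5 # replicate k 5 @ [4]) @ (replicate k 5 @ [6]) @ ?X"
  let ?A = "5 # replicate k 5 @ 6 # 5 # replicate k (5::nat)"
  let ?B = "4 # replicate k 5 @ [6::nat]"
  have f0: "factors (TFtd t k) = pre t # ?b @ ([1,2] # replicate k [1,2] @ [[1,1,2]]) @ (replicate k [1,2] @ [[1,3]]) @ ?b"
    unfolding factors_grp TFtd_def TFd_def blkF_def pre_def by (simp add: tyl_simps grp_simps)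
  have mx: "Max (insert 0 (set (TFtd t k))) = 3"
    by (rule Max_set_eq) (auto simp: TFtd_def TFd_def blkF_def pre_def)
  have g1: "gcis_string (TFtd t k) = ?G1"
    unfolding gcis_string_f[OF f0 mx] by (simp add: lex_less_Cons pre_def)
  have f1: "factors ?G1 = [[7], ?A, ?B, ?X]"
    unfolding factors_grp by (simp add: tyl_simps grp_simps)
  have mx1: "Max (insert 0 (set ?G1)) = 7"
    by (rule Max_set_eq) auto
  have g2: "gcis_string ?G1 = [11,10,8,9]"
    unfolding gcis_string_f[OF f1 mx1] by (simp add: lex_less_Cons)
  have f2: "factors [11,10,8,9::nat] = [[11,10],[8,9]]" by (simp add: factors_grp)
  have g3: "gcis_string [11,10,8,9::nat] = [13,12]"
    using gcis_string_f[OF f2, of 11] by (simp add: lex_less_Cons Max_set_eq)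
  have f3: "factors [13,12::nat] = [[13,12]]" by (simp add: factors_grp)
  have "g_is (TFtd t k) = Dsize (TFtd t k) + Dsize ?G1 + Dsize [11,10,8,9] + length [13,12::nat]"
    by (rule g_is3[OF _ g1 _ g2 _ g3]) (use f0 f1 f2 f3 in \<open>simp_all add: stops_factors TFtd_def TFd_def blkF_def pre_def\<close>)
  also have "Dsize (TFtd t k) = t + 8" unfolding Dsize_f[OF f0] by (simp add: pre_def)
  also have "Dsize ?G1 = 4 * k + 8" unfolding Dsize_f[OF f1] by simp
  also have "Dsize [11,10,8,9::nat] = 4" unfolding Dsize_f[OF f2] by simp
  finally show ?thesis by simp
qed




lemma ed_refl[simp]: "ed xs xs = 0"
  by (induction xs) auto

lemma ed_prefix: "ed (u @ xs) (u @ ys) \<le> ed xs ys"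
proof (induction u)
  case Nil then show ?case by simp
next
  case (Cons x u)
  have "ed (x # u @ xs) (x # u @ ys) \<le> ed (u @ xs) (u @ ys)" by simp
  then show ?case using Cons by simp
qed

lemma ed_zero: "ed xs ys = 0 \<Longrightarrow> xs = ys"
  by (induction xs ys rule: ed.induct) (auto split: if_splits)

lemma ed_sub1: "ed (a # v) (b # v) \<le> 1" by simp

lemma ed_ins1: "ed v (b # v) \<le> 1"
  by (cases v) auto

lemma ed_del1: "ed (a # v) v \<le> 1"
  by (cases v) auto

lemma ed_sub: "a \<noteq> b \<Longrightarrow> ed (u @ a # v) (u @ b # v) = 1"
proof -
  assume ab: "a \<noteq> b"
  have "ed (u @ a # v) (u @ b # v) \<le> 1" using ed_prefix[of u "a # v" "b # v"] ed_sub1[of a v b] by linarith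
  moreover have "ed (u @ a # v) (u @ b # v) \<noteq> 0" using ed_zero ab by fastforce
  ultimately show ?thesis by linarith
qed

lemma ed_ins: "ed (u @ v) (u @ b # v) = 1"
proof -
  have "ed (u @ v) (u @ b # v) \<le> 1" using ed_prefix[of u v "b # v"] ed_ins1[of v b] by linarith
  moreover have "ed (u @ v) (u @ b # v) \<noteq> 0" using ed_zero by (metis length_append length_Cons n_not_Suc_n add_Suc_right)
  ultimately show ?thesis by linarith
qed

lemma ed_del: "ed (u @ a # v) (u @ v) = 1"
proof -
  have "ed (u @ a # v) (u @ v) \<le> 1" using ed_prefix[of u "a # v" v] ed_del1[of a v] by linarith
  moreover have "ed (u @ a # v) (u @ v) \<noteq> 0" using ed_zero by (metis length_append length_Cons n_not_Suc_n add_Suc_right)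
  ultimately show ?thesis by linarith
qed

lemma strings_iff: "T \<in> strings \<sigma> n \<longleftrightarrow> length T = n \<and> set T \<subseteq> {1..\<sigma>}"
  unfolding strings_def by simp

lemma finite_strings: "finite (strings \<sigma> n)"
proof -
  have "strings \<sigma> n \<subseteq> {xs. set xs \<subseteq> {1..\<sigma>} \<and> length xs = n}" unfolding strings_def by auto
  moreover have "finite {xs. set xs \<subseteq> {1..\<sigma>} \<and> length xs = n}" by (rule finite_lists_length_eq) simp
  ultimately show ?thesis by (rule finite_subset)
qed

lemma finite_pairs_img: "finite {f T T' | T T'. T \<in> strings \<sigma> n \<and> T' \<in> strings \<sigma> n' \<and> P T T'}"
proof -
  have "{f T T' | T T'. T \<in> strings \<sigma> n \<and> T' \<in> strings \<sigma> n' \<and> P T T'} \<subseteq> (\<lambda>(T,T'). f T T') ` (strings \<sigma> n \<times> strings \<sigma> n')"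
    by auto
  moreover have "finite ((\<lambda>(T,T'). f T T') ` (strings \<sigma> n \<times> strings \<sigma> n'))"
    using finite_strings by auto
  ultimately show ?thesis by (rule finite_subset)
qed

lemma MS_sub_ge: "T \<in> strings \<sigma> n \<Longrightarrow> T' \<in> strings \<sigma> n \<Longrightarrow> ed T T' = 1 \<Longrightarrow> real (C T') / real (C T) \<le> MS_sub \<sigma> C n"
  unfolding MS_sub_def by (rule Max_ge[OF finite_pairs_img]) blast

lemma MS_ins_ge: "T \<in> strings \<sigma> n \<Longrightarrow> T' \<in> strings \<sigma> (n + 1) \<Longrightarrow> ed T T' = 1 \<Longrightarrow> real (C T') / real (C T) \<le> MS_ins \<sigma> C n"
  unfolding MS_ins_def by (rule Max_ge[OF finite_pairs_img]) blast

lemma MS_del_ge: "T \<in> strings \<sigma> n \<Longrightarrow> T' \<in> strings \<sigma> (n - 1) \<Longrightarrow> ed T T' = 1 \<Longrightarrow> real (C T') / real (C T) \<le> MS_del \<sigma> C n"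
  unfolding MS_del_def by (rule Max_ge[OF finite_pairs_img]) blast

lemma liminf_ge4:
  fixes f :: "nat \<Rightarrow> real"
  assumes "\<And>n. 17 \<le> n \<Longrightarrow> 4 - 51 / (real ((n - 17) div 8) + 1) \<le> f n"
  shows "4 \<le> liminf (\<lambda>n. ereal (f n))"
proof (subst le_Liminf_iff, intro allI impI)
  fix y :: ereal assume "y < 4"
  then obtain z where yz: "y < z" "z < 4" using dense by blast
  then obtain r where z: "z = ereal r" by (cases z) auto
  have r4: "r < 4" using yz z by simp
  define K where "K = nat \<lceil>51 / (4 - r)\<rceil>"
  have "r \<le> f n" if n: "n \<ge> 8 * K + 17" for n
  proof -
    have kK: "K \<le> (n - 17) div 8" using div_le_mono[of "8*K" "n-17" 8] n by simp
    have "51 / (4 - r) \<le> real K" unfolding K_def by linarith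
    then have "51 \<le> real K * (4 - r)" using r4 by (simp add: divide_le_eq)
    also have "\<dots> \<le> (real ((n - 17) div 8) + 1) * (4 - r)"
      using kK r4 by (intro mult_right_mono) auto
    finally have "51 / (real ((n - 17) div 8) + 1) \<le> 4 - r"
      by (simp add: divide_le_eq mult.commute)
    then show ?thesis using assms[of n] n by linarith
  qed
  then have "eventually (\<lambda>n. r \<le> f n) sequentially" unfolding eventually_sequentially by blast
  then show "eventually (\<lambda>n. y < ereal (f n)) sequentially"
  proof eventually_elim
    case (elim n)
    then have "ereal r \<le> ereal (f n)" by simp
    then show ?case using yz z by (meson less_le_trans)
  qed
qed

lemma ratio_bound:
  fixes g g' k :: nat
  assumes "4 * g \<le> g' + 51" "k + 1 \<le> g"
  shows "4 - 51 / (real k + 1) \<le> real g' / real g"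
proof -
  have gp: "real g > 0" using assms by simp
  have "4 - 51 / (real k + 1) \<le> 4 - 51 / real g"
    using assms gp by (intro diff_left_mono divide_left_mono) auto
  also have "\<dots> = (4 * real g - 51) / real g" using gp by (simp add: field_simps)
  also have "\<dots> \<le> real g' / real g" using assms gp by (intro divide_right_mono) auto
  finally show ?thesis .
qed




lemma len_blkF[simp]: "length (blkF k) = 2 * k + 4" unfolding blkF_def by simp
lemma len_pre[simp]: "length (pre t) = t + 1" unfolding pre_def by simp

lemma set_blkF: "set (blkF k) \<subseteq> {1..3}" unfolding blkF_def by auto
lemma set_pre: "set (pre t) \<subseteq> {1..3}" unfolding pre_def by auto

lemma decomp_n: "17 \<le> (n::nat) \<Longrightarrow> n = (n - 17) mod 8 + 8 * ((n - 17) div 8) + 17 \<and> (n - 17) mod 8 \<le> 7"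
  by auto

lemma lim_sub: "3 \<le> \<sigma> \<Longrightarrow> 4 \<le> liminf (\<lambda>n. ereal (MS_sub \<sigma> g_is n))"
proof (rule liminf_ge4)
  fix n :: nat assume s: "3 \<le> \<sigma>" and n: "17 \<le> n"
  define t where "t = (n - 17) mod 8"
  define k where "k = (n - 17) div 8"
  have nt: "n = t + 8 * k + 17" "t \<le> 7" using decomp_n[OF n] unfolding t_def k_def by auto
  let ?u = "pre t @ blkF k @ 1 # 2 # concat (replicate k [1,2]) @ [1::nat]"
  let ?v = "blkF k @ blkF k"
  have e1: "TFt t k = ?u @ 3 # ?v" unfolding TFt_def TF_def by (simp add: blkF_def)
  have e2: "TFts t k = ?u @ 1 # ?v" unfolding TFts_def by (simp add: blkF_def)
  have "TFt t k \<in> strings \<sigma> n" using nt s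
    unfolding strings_iff TFt_def TF_def by (auto simp: blkF_def pre_def)
  moreover have "TFts t k \<in> strings \<sigma> n" using nt s
    unfolding strings_iff TFts_def by (auto simp: blkF_def pre_def)
  moreover have "ed (TFt t k) (TFts t k) = 1" unfolding e1 e2 by (rule ed_sub) simp
  ultimately have "real (g_is (TFts t k)) / real (g_is (TFt t k)) \<le> MS_sub \<sigma> g_is n" by (rule MS_sub_ge)
  moreover have "4 - 51 / (real k + 1) \<le> real (g_is (TFts t k)) / real (g_is (TFt t k))"
    by (rule ratio_bound) (use nt in \<open>simp_all add: g_TFt g_TFts\<close>)
  ultimately show "4 - 51 / (real ((n - 17) div 8) + 1) \<le> MS_sub \<sigma> g_is n" unfolding k_def by linarith
qed

lemma lim_ins: "3 \<le> \<sigma> \<Longrightarrow> 4 \<le> liminf (\<lambda>n. ereal (MS_ins \<sigma> g_is n))"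
proof (rule liminf_ge4)
  fix n :: nat assume s: "3 \<le> \<sigma>" and n: "17 \<le> n"
  define t where "t = (n - 17) mod 8"
  define k where "k = (n - 17) div 8"
  have nt: "n = t + 8 * k + 17" "t \<le> 7" using decomp_n[OF n] unfolding t_def k_def by auto
  let ?u = "pre t @ blkF k @ 1 # 2 # concat (replicate k [1,2]) @ [1::nat]"
  let ?v = "3 # blkF k @ blkF k"
  have e1: "TFt t k = ?u @ ?v" unfolding TFt_def TF_def by (simp add: blkF_def)
  have e2: "TFti t k = ?u @ 1 # ?v" unfolding TFti_def TFi_def by (simp add: blkF_def)
  have "TFt t k \<in> strings \<sigma> n" using nt s
    unfolding strings_iff TFt_def TF_def by (auto simp: blkF_def pre_def)
  moreover have "TFti t k \<in> strings \<sigma> (n + 1)" using nt s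
    unfolding strings_iff TFti_def TFi_def by (auto simp: blkF_def pre_def)
  moreover have "ed (TFt t k) (TFti t k) = 1" unfolding e1 e2 by (rule ed_ins)
  ultimately have "real (g_is (TFti t k)) / real (g_is (TFt t k)) \<le> MS_ins \<sigma> g_is n" by (rule MS_ins_ge)
  moreover have "4 - 51 / (real k + 1) \<le> real (g_is (TFti t k)) / real (g_is (TFt t k))"
    by (rule ratio_bound) (use nt in \<open>simp_all add: g_TFt g_TFti\<close>)
  ultimately show "4 - 51 / (real ((n - 17) div 8) + 1) \<le> MS_ins \<sigma> g_is n" unfolding k_def by linarith
qed

lemma lim_del: "3 \<le> \<sigma> \<Longrightarrow> 4 \<le> liminf (\<lambda>n. ereal (MS_del \<sigma> g_is n))"
proof (rule liminf_ge4)
  fix n :: nat assume s: "3 \<le> \<sigma>" and n: "17 \<le> n"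
  define t where "t = (n - 17) mod 8"
  define k where "k = (n - 17) div 8"
  have nt: "n = t + 8 * k + 17" "t \<le> 7" using decomp_n[OF n] unfolding t_def k_def by auto
  let ?u = "pre t @ blkF k @ 1 # 2 # concat (replicate k [1,2]) @ [1::nat]"
  let ?v = "blkF k @ blkF k"
  have e1: "TFt t k = ?u @ 3 # ?v" unfolding TFt_def TF_def by (simp add: blkF_def)
  have e2: "TFtd t k = ?u @ ?v" unfolding TFtd_def TFd_def by (simp add: blkF_def)
  have "TFt t k \<in> strings \<sigma> n" using nt s
    unfolding strings_iff TFt_def TF_def by (auto simp: blkF_def pre_def)
  moreover have "TFtd t k \<in> strings \<sigma> (n - 1)" using nt s
    unfolding strings_iff TFtd_def TFd_def by (auto simp: blkF_def pre_def)
  moreover have "ed (TFt t k) (TFtd t k) = 1" unfolding e1 e2 by (rule ed_del)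
  ultimately have "real (g_is (TFtd t k)) / real (g_is (TFt t k)) \<le> MS_del \<sigma> g_is n" by (rule MS_del_ge)
  moreover have "4 - 51 / (real k + 1) \<le> real (g_is (TFtd t k)) / real (g_is (TFt t k))"
    by (rule ratio_bound) (use nt in \<open>simp_all add: g_TFt g_TFtd\<close>)
  ultimately show "4 - 51 / (real ((n - 17) div 8) + 1) \<le> MS_del \<sigma> g_is n" unfolding k_def by linarith
qed

lemma as_sub: "3 \<le> \<sigma> \<Longrightarrow> \<exists>c>0. \<forall>N. \<exists>T T'. T \<in> strings \<sigma> (length T) \<and> T' \<in> strings \<sigma> (length T) \<and>
        ed T T' = 1 \<and> N \<le> g_is T \<and> c * real (length T) \<le> real (g_is T) \<and>
        int (g_is T') - int (g_is T) \<ge> 3 * int (g_is T) - 13"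
proof (intro exI[of _ "1/4"] conjI allI)
  fix N assume s: "3 \<le> \<sigma>"
  let ?u = "blkA N @ 2 # replicate N (2::nat)"
  let ?v = "blkA N @ blkA N"
  have e1: "TA N = ?u @ 3 # ?v" unfolding TA_def by (simp add: blkA_def)
  have e2: "TA' N = ?u @ 1 # ?v" unfolding TA'_def by (simp add: blkA_def)
  show "\<exists>T T'. T \<in> strings \<sigma> (length T) \<and> T' \<in> strings \<sigma> (length T) \<and>
        ed T T' = 1 \<and> N \<le> g_is T \<and> 1/4 * real (length T) \<le> real (g_is T) \<and>
        int (g_is T') - int (g_is T) \<ge> 3 * int (g_is T) - 13"
  proof (intro exI conjI)
    show "TA N \<in> strings \<sigma> (length (TA N))" using s unfolding strings_iff TA_def blkA_def by auto
    show "TA' N \<in> strings \<sigma> (length (TA N))" using s unfolding strings_iff TA_def TA'_def blkA_def by auto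
    show "ed (TA N) (TA' N) = 1" unfolding e1 e2 by (rule ed_sub) simp
    show "N \<le> g_is (TA N)" by (simp add: g_TA)
    show "1/4 * real (length (TA N)) \<le> real (g_is (TA N))" proof -
      have "length (TA N) = 4 * N + 8" by (simp add: TA_def blkA_def)
      then show ?thesis by (simp add: g_TA)
    qed
    show "int (g_is (TA' N)) - int (g_is (TA N)) \<ge> 3 * int (g_is (TA N)) - 13" by (simp add: g_TA g_TA')
  qed
qed simp

lemma as_ins: "3 \<le> \<sigma> \<Longrightarrow> \<exists>c>0. \<forall>N. \<exists>T T'. T \<in> strings \<sigma> (length T) \<and> T' \<in> strings \<sigma> (length T + 1) \<and>
        ed T T' = 1 \<and> N \<le> g_is T \<and> c * real (length T) \<le> real (g_is T) \<and>
        int (g_is T') - int (g_is T) \<ge> 3 * int (g_is T) - 24"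
proof (intro exI[of _ "1/8"] conjI allI)
  fix N assume s: "3 \<le> \<sigma>"
  let ?u = "blkF N @ 1 # 2 # concat (replicate N [1,2]) @ [1::nat]"
  let ?v = "3 # blkF N @ blkF N"
  have e1: "TF N = ?u @ ?v" unfolding TF_def by (simp add: blkF_def)
  have e2: "TFi N = ?u @ 1 # ?v" unfolding TFi_def by (simp add: blkF_def)
  show "\<exists>T T'. T \<in> strings \<sigma> (length T) \<and> T' \<in> strings \<sigma> (length T + 1) \<and>
        ed T T' = 1 \<and> N \<le> g_is T \<and> 1/8 * real (length T) \<le> real (g_is T) \<and>
        int (g_is T') - int (g_is T) \<ge> 3 * int (g_is T) - 24"
  proof (intro exI conjI)
    show "TF N \<in> strings \<sigma> (length (TF N))" using s unfolding strings_iff TF_def blkF_def by auto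
    show "TFi N \<in> strings \<sigma> (length (TF N) + 1)" using s unfolding strings_iff TF_def TFi_def blkF_def by auto
    show "ed (TF N) (TFi N) = 1" unfolding e1 e2 by (rule ed_ins)
    show "N \<le> g_is (TF N)" by (simp add: g_TF)
    show "1/8 * real (length (TF N)) \<le> real (g_is (TF N))" proof -
      have "length (TF N) = 8 * N + 16" by (simp add: TF_def)
      then show ?thesis by (simp add: g_TF)
    qed
    show "int (g_is (TFi N)) - int (g_is (TF N)) \<ge> 3 * int (g_is (TF N)) - 24" by (simp add: g_TF g_TFi)
  qed
qed simp

lemma as_del: "3 \<le> \<sigma> \<Longrightarrow> \<exists>c>0. \<forall>N. \<exists>T T'. T \<in> strings \<sigma> (length T) \<and> T' \<in> strings \<sigma> (length T - 1) \<and>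
        ed T T' = 1 \<and> N \<le> g_is T \<and> c * real (length T) \<le> real (g_is T) \<and>
        int (g_is T') - int (g_is T) \<ge> 3 * int (g_is T) - 29"
proof (intro exI[of _ "1/8"] conjI allI)
  fix N assume s: "3 \<le> \<sigma>"
  let ?u = "blkF N @ 1 # 2 # concat (replicate N [1,2]) @ [1::nat]"
  let ?v = "blkF N @ blkF N"
  have e1: "TF N = ?u @ 3 # ?v" unfolding TF_def by (simp add: blkF_def)
  have e2: "TFd N = ?u @ ?v" unfolding TFd_def by (simp add: blkF_def)
  show "\<exists>T T'. T \<in> strings \<sigma> (length T) \<and> T' \<in> strings \<sigma> (length T - 1) \<and>
        ed T T' = 1 \<and> N \<le> g_is T \<and> 1/8 * real (length T) \<le> real (g_is T) \<and>
        int (g_is T') - int (g_is T) \<ge> 3 * int (g_is T) - 29"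
  proof (intro exI conjI)
    show "TF N \<in> strings \<sigma> (length (TF N))" using s unfolding strings_iff TF_def blkF_def by auto
    show "TFd N \<in> strings \<sigma> (length (TF N) - 1)" using s unfolding strings_iff TF_def TFd_def blkF_def by auto
    show "ed (TF N) (TFd N) = 1" unfolding e1 e2 by (rule ed_del)
    show "N \<le> g_is (TF N)" by (simp add: g_TF)
    show "1/8 * real (length (TF N)) \<le> real (g_is (TF N))" proof -
      have "length (TF N) = 8 * N + 16" by (simp add: TF_def)
      then show ?thesis by (simp add: g_TF)
    qed
    show "int (g_is (TFd N)) - int (g_is (TF N)) \<ge> 3 * int (g_is (TF N)) - 29" by (simp add: g_TF g_TFd)
  qed
qed simp

theorem mainTheorem20:
  shows "\<exists>\<sigma>0. \<forall>\<sigma>\<ge>\<sigma>0.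
    liminf (\<lambda>n. ereal (MS_sub \<sigma> g_is n)) \<ge> 4 \<and>
    liminf (\<lambda>n. ereal (MS_ins \<sigma> g_is n)) \<ge> 4 \<and>
    liminf (\<lambda>n. ereal (MS_del \<sigma> g_is n)) \<ge> 4 \<and>
    (\<exists>c>0. \<forall>N. \<exists>T T'. T \<in> strings \<sigma> (length T) \<and> T' \<in> strings \<sigma> (length T) \<and>
        ed T T' = 1 \<and> N \<le> g_is T \<and> c * real (length T) \<le> real (g_is T) \<and>
        int (g_is T') - int (g_is T) \<ge> 3 * int (g_is T) - 13) \<and>
    (\<exists>c>0. \<forall>N. \<exists>T T'. T \<in> strings \<sigma> (length T) \<and> T' \<in> strings \<sigma> (length T + 1) \<and>
        ed T T' = 1 \<and> N \<le> g_is T \<and> c * real (length T) \<le> real (g_is T) \<and>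
        int (g_is T') - int (g_is T) \<ge> 3 * int (g_is T) - 24) \<and>
    (\<exists>c>0. \<forall>N. \<exists>T T'. T \<in> strings \<sigma> (length T) \<and> T' \<in> strings \<sigma> (length T - 1) \<and>
        ed T T' = 1 \<and> N \<le> g_is T \<and> c * real (length T) \<le> real (g_is T) \<and>
        int (g_is T') - int (g_is T) \<ge> 3 * int (g_is T) - 29)"
  using lim_sub lim_ins lim_del as_sub as_ins as_del by blast


end
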